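(* Let $\Omega$ be a domain in $\mathbb{C}^{n+m}$ with coordinates $(z,w)$, let $p(z,w)=w$, $q(z,w)=z$, $D\coloneqq p(\Omega)$ and $\Omega_w\coloneqq p^{-1}(w)\cap\Omega$ for $w\in D$. Let $\xi(\cdot)=(\xi_\alpha(\cdot))_{\alpha\in\mathbb{N}^n}$ be a functional-valued function on $D$ with $\xi(w)\in\ell_1^{(n)}$ for all $w\in D$. Suppose $\xi(\cdot)$ satisfies the locally uniformly bounded property near some $w_0\in D$ and each $\xi_\alpha(\cdot)$ is continuous at $w_0$. Let $(z_0,w_0)\in\Omega$ and let $V\subset\subset q(\Omega_{w_0})$ be an open set with $z_0\in V$. Let $\{(z_j,w_j)\}\subset\Omega$ with $z_j\in V$ for all $j\in\mathbb{Z}_+$ and $(z_j,w_j)\to(z_0,w_0)$. If $f_j$ is holomorphic on $q(\Omega_{w_j})$ for each $j$ and $f_j$ converges uniformly on compact subsets of $V$ to $f\in\mathcal{O}(V)$, then $\lim_{j\to+\infty}(\xi(w_j)\cdot f_j)(z_j)=(\xi(w_0)\cdot f)(z_0)$.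
   Context: $\mathbb{N}=\mathbb{Z}_{\ge 0}$. $\ell_1^{(n)}$ is the space of sequences $\xi=(\xi_\alpha)_{\alpha\in\mathbb{N}^n}$ of complex numbers with $\sum_{\alpha}|\xi_\alpha|\rho^{|\alpha|}<+\infty$ for every $\rho>0$. For a holomorphic germ $F$ at $z_0\in\mathbb{C}^n$, $(\xi\cdot F)(z_0)\coloneqq\sum_\alpha \xi_\alpha F^{(\alpha)}(z_0)/\alpha!$. $\xi(\cdot)$ satisfies the locally uniformly bounded property near $w_0$ if for every $\rho>0$ there is a neighborhood $V'$ of $w_0$ with $\sup_{w'\in V'}\sum_\alpha|\xi_\alpha(w')|\rho^{|\alpha|}<+\infty$. *)

theory Defs
  imports "HOL-Analysis.Analysis"
begin

text \<open>Points of C^n are represented as vectors of type complex^'n ('n a finite type with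
  CARD('n) = n). Multi-indices alpha in N^n are functions 'n => nat.\<close>

definition mi_abs :: "('n::finite \<Rightarrow> nat) \<Rightarrow> nat" where
  "mi_abs \<alpha> = (\<Sum>i\<in>UNIV. \<alpha> i)"

definition mi_fact :: "('n::finite \<Rightarrow> nat) \<Rightarrow> nat" where
  "mi_fact \<alpha> = (\<Prod>i\<in>UNIV. fact (\<alpha> i))"

text \<open>Holomorphy on an open subset of C^n: complex (Frechet) differentiability,
  i.e. real differentiability with a complex-linear derivative.\<close>

definition holo_on :: "(complex^'n::finite \<Rightarrow> complex) \<Rightarrow> (complex^'n) set \<Rightarrow> bool" where
  "holo_on F U \<longleftrightarrow> (\<forall>z\<in>U. \<exists>L. (F has_derivative L) (at z) \<and>
      (\<forall>v. L (\<chi> k. \<i> * v $ k) = \<i> * L v))"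

definition cpartial :: "'n::finite \<Rightarrow> (complex^'n \<Rightarrow> complex) \<Rightarrow> complex^'n \<Rightarrow> complex" where
  "cpartial i F z = deriv (\<lambda>t. F (\<chi> k. if k = i then t else z $ k)) (z $ i)"

text \<open>Iterated partial derivative F^(alpha); the order in which the coordinates are
  differentiated is immaterial for holomorphic F.\<close>

fun mderiv_aux :: "nat \<Rightarrow> ('n::finite \<Rightarrow> nat) \<Rightarrow> (complex^'n \<Rightarrow> complex) \<Rightarrow> complex^'n \<Rightarrow> complex" where
  "mderiv_aux 0 \<alpha> F = F"
| "mderiv_aux (Suc k) \<alpha> F =
     (if \<alpha> = (\<lambda>_. 0) then F
      else (let i = (SOME i. 0 < \<alpha> i) in mderiv_aux k (\<alpha>(i := \<alpha> i - 1)) (cpartial i F)))"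

definition mderiv :: "('n::finite \<Rightarrow> nat) \<Rightarrow> (complex^'n \<Rightarrow> complex) \<Rightarrow> complex^'n \<Rightarrow> complex" where
  "mderiv \<alpha> F = mderiv_aux (mi_abs \<alpha>) \<alpha> F"

definition ell1 :: "(('n::finite \<Rightarrow> nat) \<Rightarrow> complex) set" where
  "ell1 = {\<xi>. \<forall>\<rho>>0. (\<lambda>\<alpha>. norm (\<xi> \<alpha>) * \<rho> ^ mi_abs \<alpha>) summable_on UNIV}"

definition act :: "(('n::finite \<Rightarrow> nat) \<Rightarrow> complex) \<Rightarrow> (complex^'n \<Rightarrow> complex) \<Rightarrow> complex^'n \<Rightarrow> complex" where
  "act \<xi> F z0 = (\<Sum>\<^sub>\<infinity>\<alpha>. \<xi> \<alpha> * mderiv \<alpha> F z0 / of_nat (mi_fact \<alpha>))"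

definition loc_unif_bdd ::
  "('w::topological_space \<Rightarrow> ('n::finite \<Rightarrow> nat) \<Rightarrow> complex) \<Rightarrow> 'w set \<Rightarrow> 'w \<Rightarrow> bool" where
  "loc_unif_bdd \<xi> D w0 \<longleftrightarrow> (\<forall>\<rho>>0. \<exists>V'. open V' \<and> w0 \<in> V' \<and>
      (\<exists>B. \<forall>w'\<in>V' \<inter> D. (\<Sum>\<^sub>\<infinity>\<alpha>. norm (\<xi> w' \<alpha>) * \<rho> ^ mi_abs \<alpha>) \<le> B))"

end

theory Submission
  imports Defs "HOL-Complex_Analysis.Complex_Analysis"
begin


definition upd :: "complex^'n::finite \<Rightarrow> 'n \<Rightarrow> complex \<Rightarrow> complex^'n" where
  "upd z i t = (\<chi> k. if k = i then t else z$k)"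

lemma upd_nth[simp]: "upd z i t $ k = (if k = i then t else z$k)"
  by (simp add: upd_def)

lemma upd_upd_same[simp]: "upd (upd z i s) i t = upd z i t"
  by (simp add: upd_def vec_eq_iff)

lemma upd_self[simp]: "upd z i (z$i) = z"
  by (simp add: upd_def vec_eq_iff)

lemma upd_comm: "i \<noteq> j \<Longrightarrow> upd (upd z i s) j t = upd (upd z j t) i s"
  by (simp add: upd_def vec_eq_iff)

lemma cpartial_upd: "cpartial i F z = deriv (\<lambda>t. F (upd z i t)) (z$i)"
  by (simp add: cpartial_def upd_def)

definition PD :: "complex^'n::finite \<Rightarrow> real \<Rightarrow> (complex^'n) set" where
  "PD c R = {z. \<forall>k. z$k \<in> ball (c$k) R}"

lemma upd_PD: "z \<in> PD c R \<Longrightarrow> upd z i t \<in> PD c R \<longleftrightarrow> t \<in> ball (c$i) R"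
  by (auto simp: PD_def)

lemma open_PD: "open (PD c R)"
proof -
  have "PD c R = (\<Inter>k. (\<lambda>z. z$k) -` ball (c$k) R)" by (auto simp: PD_def)
  moreover have "open ((\<lambda>z::complex^'a. z$k) -` ball (c$k) R)" for k
    by (rule open_vimage) (auto intro!: continuous_intros)
  ultimately show ?thesis by auto
qed

lemma PD_mono: "R' \<le> R \<Longrightarrow> PD c R' \<subseteq> PD c R"
  unfolding PD_def mem_ball by (smt (verit) mem_Collect_eq subsetI)

definition SHP :: "(complex^'n::finite \<Rightarrow> complex) \<Rightarrow> complex^'n \<Rightarrow> real \<Rightarrow> bool" where
  "SHP F c R \<longleftrightarrow> continuous_on (PD c R) F \<and>
     (\<forall>z\<in>PD c R. \<forall>i. (\<lambda>t. F (upd z i t)) holomorphic_on ball (c$i) R)"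

lemma slice_cpartial: "(\<lambda>t. cpartial i G (upd z i t)) = deriv (\<lambda>t. G (upd z i t))"
  by (simp add: cpartial_upd)

lemma slice_iter: "(\<lambda>t. (cpartial i ^^ a) G (upd z i t)) = (deriv ^^ a) (\<lambda>t. G (upd z i t))"
proof (induction a)
  case 0 then show ?case by simp
next
  case (Suc a)
  have "(\<lambda>t. (cpartial i ^^ Suc a) G (upd z i t)) = (\<lambda>t. cpartial i ((cpartial i ^^ a) G) (upd z i t))"
    by simp
  also have "\<dots> = deriv (\<lambda>t. (cpartial i ^^ a) G (upd z i t))" by (rule slice_cpartial)
  also have "\<dots> = (deriv ^^ Suc a) (\<lambda>t. G (upd z i t))" using Suc by simp
  finally show ?case .
qed

definition EE :: "real \<Rightarrow> complex" where "EE t = exp (2 * of_real pi * \<i> * of_real t)"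

definition Phi where
  "Phi F i a r z t = fact a / of_real r ^ a * F (upd z i (z$i + of_real r * EE t)) / EE t ^ a"

lemma EE_nz[simp]: "EE t \<noteq> 0" by (simp add: EE_def)
lemma norm_EE[simp]: "norm (EE t) = 1"
  unfolding EE_def by (metis norm_exp_i_times mult.commute mult.left_commute of_real_mult of_real_numeral)

lemma formula:
  assumes "SHP F c R" "0 < r" "z \<in> PD c (R - r)"
  shows "(cpartial i ^^ a) F z = integral {0..1} (Phi F i a r z)"
proof -
  define g where "g = (\<lambda>t. F (upd z i t))"
  have zi: "dist (c$i) (z$i) < R - r" using assms(3) by (auto simp: PD_def)
  have sub: "cball (z$i) r \<subseteq> ball (c$i) R"
  proof
    fix x assume "x \<in> cball (z$i) r"
    then show "x \<in> ball (c$i) R" using dist_triangle[of "c$i" x "z$i"] zi by (auto simp: dist_commute)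
  qed
  have hol: "g holomorphic_on ball (c$i) R"
  proof -
    have "z \<in> PD c R" using assms(2,3) PD_mono[of "R-r" R c] by auto
    then show ?thesis using assms(1) by (auto simp: SHP_def g_def)
  qed
  have "((\<lambda>u. g u / (u - z$i) ^ Suc a) has_contour_integral ((2 * pi * \<i>) / (fact a) * (deriv ^^ a) g (z$i)))
           (circlepath (z$i) r)"
    apply (rule Cauchy_has_contour_integral_higher_derivative_circlepath)
      subgoal using hol sub by (meson holomorphic_on_imp_continuous_on continuous_on_subset)
      subgoal using hol sub ball_subset_cball by (meson holomorphic_on_subset subset_trans)
      subgoal using assms(2) by simp
      done
  then have ci: "contour_integral (circlepath (z$i) r) (\<lambda>u. g u / (u - z$i) ^ Suc a) = (2 * pi * \<i>) / (fact a) * (deriv ^^ a) g (z$i)"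
    by (rule contour_integral_unique)
  have "(deriv ^^ a) g (z$i) = fact a / (2 * pi * \<i>) * contour_integral (circlepath (z$i) r) (\<lambda>u. g u / (u - z$i) ^ Suc a)"
    using ci by (simp add: field_simps)
  also have "contour_integral (circlepath (z$i) r) (\<lambda>u. g u / (u - z$i) ^ Suc a)
     = integral {0..1} (\<lambda>t. (2 * pi * \<i>) / fact a * Phi F i a r z t)"
    unfolding contour_integral_integral vector_derivative_circlepath unfolding circlepath EE_def[symmetric]
    apply (rule integral_cong)
    using assms(2) by (simp add: Phi_def g_def field_simps)
  also have "\<dots> = (2 * pi * \<i>) / fact a * integral {0..1} (Phi F i a r z)"
    by (rule integral_mult_right)
  finally have "(deriv ^^ a) g (z$i) = integral {0..1} (Phi F i a r z)" by simp
  moreover have "(cpartial i ^^ a) F z = (deriv ^^ a) g (z$i)"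
    using fun_cong[OF slice_iter[where i=i and a=a and G=F and z=z], of "z$i"] by (simp add: g_def)
  ultimately show ?thesis by simp
qed

lemma continuous_on_upd[continuous_intros]:
  "continuous_on S f \<Longrightarrow> continuous_on S g \<Longrightarrow> continuous_on S (\<lambda>x. upd (f x) i (g x))"
  unfolding upd_def apply (intro continuous_on_vec_lambda)
  subgoal for k by (cases "k = i") (auto intro!: continuous_intros)
  done

lemma continuous_on_EE[continuous_intros]: "continuous_on S f \<Longrightarrow> continuous_on S (\<lambda>x. EE (f x))"
  unfolding EE_def by (auto intro!: continuous_intros)

lemma pt_in_PD:
  assumes "z \<in> PD c (R - r)" "0 < r"
  shows "upd z i (z$i + of_real r * EE t) \<in> PD c R"
proof -
  have zi: "dist (c$i) (z$i) < R - r" using assms by (auto simp: PD_def)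
  have "dist (c$i) (z$i + of_real r * EE t) \<le> dist (c$i) (z$i) + dist (z$i) (z$i + of_real r * EE t)"
    by (rule dist_triangle)
  also have "dist (z$i) (z$i + of_real r * EE t) = r" using assms(2) by (simp add: dist_norm norm_mult)
  finally have "dist (c$i) (z$i + of_real r * EE t) < R" using zi by simp
  moreover have "z \<in> PD c R" using assms PD_mono[of "R-r" R c] by auto
  ultimately show ?thesis by (simp add: upd_PD)
qed

lemma Phi_cont:
  assumes "SHP F c R" "0 < r"
  shows "continuous_on (PD c (R - r) \<times> {0..1}) (\<lambda>(z,t). Phi F i a r z t)"
proof -
  have cF: "continuous_on (PD c R) F" using assms by (simp add: SHP_def)
  have "continuous_on (PD c (R - r) \<times> {0..1}) (\<lambda>x. F (upd (fst x) i (fst x $ i + of_real r * EE (snd x))))"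
    apply (rule continuous_on_compose2[OF cF])
    using pt_in_PD[OF _ assms(2)] by (auto intro!: continuous_intros)
  then show ?thesis unfolding Phi_def split_beta
    using assms(2) by (auto intro!: continuous_intros)
qed

lemma cpartial_cont_shrink:
  assumes "SHP F c R" "0 < r"
  shows "continuous_on (PD c (R - r)) ((cpartial i ^^ a) F)"
proof -
  have "continuous_on (PD c (R - r)) (\<lambda>z. integral (cbox 0 1) (Phi F i a r z))"
    by (rule integral_continuous_on_param) (use Phi_cont[OF assms, of i a] in simp)
  then show ?thesis
    by (rule continuous_on_eq) (use formula[OF assms] in auto)
qed

lemma PD_inner:
  assumes "z \<in> PD c R"
  shows "\<exists>r>0. z \<in> PD c (R - r)"
proof -
  define m where "m = Max (range (\<lambda>k. dist (c$k) (z$k)))"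
  have fin: "finite (range (\<lambda>k. dist (c$k) (z$k)))" by simp
  have "m \<in> range (\<lambda>k. dist (c$k) (z$k))" unfolding m_def by (rule Max_in[OF fin]) auto
  then have mR: "m < R" using assms by (auto simp: PD_def)
  have hm: "dist (c$k) (z$k) \<le> m" for k unfolding m_def by (rule Max_ge[OF fin]) auto
  have "dist (c$k) (z$k) < R - (R - m)/2" for k using hm[of k] mR by argo
  then have "z \<in> PD c (R - (R - m)/2)" by (auto simp: PD_def)
  moreover have "(R - m)/2 > 0" using mR by simp
  ultimately show ?thesis by blast
qed

lemma cpartial_cont:
  assumes "SHP F c R"
  shows "continuous_on (PD c R) ((cpartial i ^^ a) F)"
proof -
  have "continuous (at z) ((cpartial i ^^ a) F)" if z: "z \<in> PD c R" for z
  proof -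
    obtain r where r: "r > 0" "z \<in> PD c (R - r)" using PD_inner[OF z] by blast
    show ?thesis
      using cpartial_cont_shrink[OF assms r(1), where i=i and a=a] r(2) continuous_on_eq_continuous_at[OF open_PD]
      by blast
  qed
  then show ?thesis by (simp add: continuous_at_imp_continuous_on)
qed

lemma Phi_cont_t:
  assumes "SHP F c R" "0 < r" "z \<in> PD c (R - r)"
  shows "continuous_on {0..1} (Phi F i a r z)"
proof -
  have "continuous_on {0..1} ((\<lambda>(z,t). Phi F i a r z t) \<circ> (\<lambda>t. (z,t)))"
    apply (rule continuous_on_compose)
     apply (auto intro!: continuous_intros)[1]
    apply (rule continuous_on_subset[OF Phi_cont[OF assms(1,2)]])
    using assms(3) by auto
  then show ?thesis by (simp add: o_def)
qed

lemma SHP_cpartial: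
  assumes F: "SHP F c R" and r: "0 < r"
  shows "SHP ((cpartial i ^^ a) F) c (R - r)"
  unfolding SHP_def
proof (intro conjI ballI allI)
  show "continuous_on (PD c (R - r)) ((cpartial i ^^ a) F)" by (rule cpartial_cont_shrink[OF F r])
next
  fix z j assume z: "z \<in> PD c (R - r)"
  have zR: "z \<in> PD c R" using z r PD_mono[of "R-r" R c] by auto
  show "(\<lambda>t. (cpartial i ^^ a) F (upd z j t)) holomorphic_on ball (c $ j) (R - r)"
  proof (cases "j = i")
    case True
    have "(deriv ^^ a) (\<lambda>t. F (upd z i t)) holomorphic_on ball (c $ i) R"
      using F zR by (auto simp: SHP_def intro!: holomorphic_higher_deriv)
    then have "(deriv ^^ a) (\<lambda>t. F (upd z i t)) holomorphic_on ball (c $ i) (R - r)"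
      by (rule holomorphic_on_subset) (use r in auto)
    then show ?thesis using True by (simp add: slice_iter)
  next
    case False
    define w where "w t = upd z i (z$i + of_real r * EE t)" for t
    have wR: "w t \<in> PD c R" for t unfolding w_def by (rule pt_in_PD[OF z r])
    define h where "h s t = Phi F i a r (upd z j s) t" for s t
    define hx where "hx s t = fact a / of_real r ^ a * cpartial j F (upd (w t) j s) / EE t ^ a" for s t
    have hform: "h s t = fact a / of_real r ^ a * F (upd (w t) j s) / EE t ^ a" for s t
      unfolding h_def Phi_def w_def using False by (simp add: upd_comm)
    have sR: "ball (c$j) (R - r) \<subseteq> ball (c$j) R" using r by auto
    have "(\<lambda>s. integral (cbox 0 1) (h s)) holomorphic_on ball (c $ j) (R - r)"
    proof (rule leibniz_rule_holomorphic)
      fix s t assume s: "s \<in> ball (c $ j) (R - r)" and t: "t \<in> cbox (0::real) 1"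
      have hol: "(\<lambda>s. F (upd (w t) j s)) holomorphic_on ball (c$j) R"
        using F wR by (auto simp: SHP_def)
      have "((\<lambda>s. F (upd (w t) j s)) has_field_derivative deriv (\<lambda>s. F (upd (w t) j s)) s) (at s within ball (c $ j) (R - r))"
        by (rule holomorphic_derivI[OF hol]) (use s sR in auto)
      moreover have "deriv (\<lambda>s. F (upd (w t) j s)) s = cpartial j F (upd (w t) j s)"
        using fun_cong[OF slice_cpartial[where i=j and G=F and z="w t"], of s] by simp
      ultimately have "((\<lambda>s. F (upd (w t) j s)) has_field_derivative cpartial j F (upd (w t) j s)) (at s within ball (c $ j) (R - r))"
        by simp
      then have "((\<lambda>s. fact a / of_real r ^ a * F (upd (w t) j s) / EE t ^ a) has_field_derivative hx s t) (at s within ball (c $ j) (R - r))"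
        unfolding hx_def using r by (auto intro!: derivative_eq_intros)
      then show "((\<lambda>s. h s t) has_field_derivative hx s t) (at s within ball (c $ j) (R - r))"
        by (simp add: hform)
    next
      fix s assume s: "s \<in> ball (c $ j) (R - r)"
      have "upd z j s \<in> PD c (R - r)" using z s by (simp add: upd_PD)
      then show "h s integrable_on cbox 0 1"
        unfolding h_def by (auto intro!: integrable_continuous_real Phi_cont_t[OF F r])
    next
      have cj: "continuous_on (PD c R) (cpartial j F)"
        using cpartial_cont[OF F, where i=j and a=1] by simp
      have "continuous_on (ball (c $ j) (R - r) \<times> cbox 0 1) (\<lambda>x. cpartial j F (upd (w (snd x)) j (fst x)))"
        apply (rule continuous_on_compose2[OF cj])
        unfolding w_def
         apply (auto intro!: continuous_intros)[1]
        using wR sR unfolding w_def by (auto simp: upd_PD)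
      then show "continuous_on (ball (c $ j) (R - r) \<times> cbox 0 1) (\<lambda>(s, t). hx s t)"
        unfolding hx_def split_beta using r by (auto intro!: continuous_intros)
    qed (rule convex_ball)
    then show ?thesis
    proof (rule holomorphic_transform)
      fix s assume s: "s \<in> ball (c $ j) (R - r)"
      have "upd z j s \<in> PD c (R - r)" using z s by (simp add: upd_PD)
      then show "integral (cbox 0 1) (h s) = (cpartial i ^^ a) F (upd z j s)"
        unfolding h_def using formula[OF F r] by simp
    qed
  qed
qed

lemma cpartial_diff_bound:
  assumes F1: "SHP F1 c R" and F2: "SHP F2 c R" and r: "0 < r"
    and M: "\<forall>z\<in>PD c R. norm (F1 z - F2 z) \<le> M" and z: "z \<in> PD c (R - r)"
  shows "norm ((cpartial i ^^ a) F1 z - (cpartial i ^^ a) F2 z) \<le> fact a * M / r ^ a"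
proof -
  have c1: "continuous_on {0..1} (Phi F1 i a r z)" by (rule Phi_cont_t[OF F1 r z])
  have c2: "continuous_on {0..1} (Phi F2 i a r z)" by (rule Phi_cont_t[OF F2 r z])
  have "(cpartial i ^^ a) F1 z - (cpartial i ^^ a) F2 z = integral {0..1} (Phi F1 i a r z) - integral {0..1} (Phi F2 i a r z)"
    using formula[OF F1 r z] formula[OF F2 r z] by simp
  also have "\<dots> = integral {0..1} (\<lambda>t. Phi F1 i a r z t - Phi F2 i a r z t)"
    by (rule integral_diff[symmetric]) (auto intro!: integrable_continuous_real c1 c2)
  finally have eq: "(cpartial i ^^ a) F1 z - (cpartial i ^^ a) F2 z = integral {0..1} (\<lambda>t. Phi F1 i a r z t - Phi F2 i a r z t)" .
  have "norm (integral {0..1} (\<lambda>t. Phi F1 i a r z t - Phi F2 i a r z t)) \<le> (fact a * M / r ^ a) * (1 - 0)"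
  proof (rule integral_bound)
    show "continuous_on {0..1} (\<lambda>t. Phi F1 i a r z t - Phi F2 i a r z t)"
      by (intro continuous_intros c1 c2)
  next
    fix t :: real assume "t \<in> {0..1}"
    define p where "p = upd z i (z$i + of_real r * EE t)"
    have p: "p \<in> PD c R" unfolding p_def by (rule pt_in_PD[OF z r])
    have "Phi F1 i a r z t - Phi F2 i a r z t = fact a / of_real r ^ a * (F1 p - F2 p) / EE t ^ a"
      unfolding Phi_def p_def by (simp add: right_diff_distrib diff_divide_distrib)
    then have "norm (Phi F1 i a r z t - Phi F2 i a r z t) = fact a / r ^ a * norm (F1 p - F2 p)"
      using r by (simp add: norm_mult norm_divide norm_power)
    also have "\<dots> \<le> fact a / r ^ a * M"
      using M p r by (intro mult_left_mono) auto
    finally show "norm (Phi F1 i a r z t - Phi F2 i a r z t) \<le> fact a * M / r ^ a" by simp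
  qed simp
  then show ?thesis using eq by simp
qed

lemma mderiv_aux_block:
  "\<alpha> i = a \<Longrightarrow> (SOME j. 0 < \<alpha> j) = i \<Longrightarrow> 0 < a \<Longrightarrow>
   mderiv_aux (a + m) \<alpha> F = mderiv_aux m (\<alpha>(i:=0)) ((cpartial i ^^ a) F)"
proof (induction a arbitrary: \<alpha> F)
  case 0 then show ?case by simp
next
  case (Suc a)
  have nz: "\<alpha> \<noteq> (\<lambda>_. 0)" using Suc.prems(1) by auto
  have step: "mderiv_aux (Suc a + m) \<alpha> F = mderiv_aux (a + m) (\<alpha>(i := a)) (cpartial i F)"
    using nz Suc.prems by (simp add: Let_def)
  show ?case
  proof (cases "a = 0")
    case True
    then show ?thesis using step by (simp del: mderiv_aux.simps add: fun_upd_def)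
  next
    case False
    have pe: "(\<lambda>j. 0 < (\<alpha>(i := a)) j) = (\<lambda>j. 0 < \<alpha> j)" using False Suc.prems(1) by auto
    have "mderiv_aux (Suc a + m) \<alpha> F = mderiv_aux (a + m) (\<alpha>(i := a)) (cpartial i F)" by (rule step)
    also have "\<dots> = mderiv_aux m ((\<alpha>(i := a))(i:=0)) ((cpartial i ^^ a) (cpartial i F))"
      by (rule Suc.IH) (use False pe Suc.prems in auto)
    also have "(\<alpha>(i := a))(i:=0) = \<alpha>(i:=0)" by simp
    also have "(cpartial i ^^ a) (cpartial i F) = (cpartial i ^^ Suc a) F" by (simp only: funpow_Suc_right o_apply)
    finally show ?thesis .
  qed
qed

lemma mi_abs_split: "mi_abs \<alpha> = \<alpha> i + mi_abs (\<alpha>(i:=0))"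
proof -
  have "mi_abs \<alpha> = \<alpha> i + sum \<alpha> (UNIV - {i})" unfolding mi_abs_def by (rule sum.remove) auto
  moreover have "mi_abs (\<alpha>(i:=0)) = 0 + sum (\<alpha>(i:=0)) (UNIV - {i})" unfolding mi_abs_def
    using sum.remove[of UNIV i "\<alpha>(i:=0)"] by simp
  moreover have "sum (\<alpha>(i:=0)) (UNIV - {i}) = sum \<alpha> (UNIV - {i})" by (rule sum.cong) auto
  ultimately show ?thesis by simp
qed

lemma mi_fact_split: "mi_fact \<alpha> = fact (\<alpha> i) * mi_fact (\<alpha>(i:=0))"
proof -
  have "mi_fact \<alpha> = fact (\<alpha> i) * prod (\<lambda>j. fact (\<alpha> j)) (UNIV - {i})" unfolding mi_fact_def by (rule prod.remove) auto
  moreover have "mi_fact (\<alpha>(i:=0)) = fact 0 * prod (\<lambda>j. fact ((\<alpha>(i:=0)) j)) (UNIV - {i})" unfolding mi_fact_def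
    using prod.remove[of UNIV i "\<lambda>j. fact ((\<alpha>(i:=0)) j)"] by simp
  moreover have "prod (\<lambda>j. fact ((\<alpha>(i:=0)) j)) (UNIV - {i}) = prod (\<lambda>j. fact (\<alpha> j)) (UNIV - {i})" by (rule prod.cong) auto
  ultimately show ?thesis by simp
qed

lemma mderiv_block:
  assumes "0 < \<alpha> i" "(SOME j. 0 < \<alpha> j) = i"
  shows "mderiv \<alpha> F = mderiv (\<alpha>(i:=0)) ((cpartial i ^^ \<alpha> i) F)"
  unfolding mderiv_def mi_abs_split[of \<alpha> i]
  by (rule mderiv_aux_block) (use assms in auto)

lemma cpartial_zero: "cpartial i (\<lambda>_. 0) = (\<lambda>_. 0)"
  by (simp add: cpartial_def fun_eq_iff)

lemma mderiv_aux_zero: "mderiv_aux k \<alpha> (\<lambda>_. 0) = (\<lambda>_. 0)"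
  by (induction k arbitrary: \<alpha>) (auto simp: Let_def cpartial_zero)

lemma mderiv_zero: "mderiv \<alpha> (\<lambda>_. 0) = (\<lambda>_. 0)"
  by (simp add: mderiv_def mderiv_aux_zero)

lemma mderiv_main:
  fixes r :: real assumes r: "0 < r"
  shows "\<forall>\<alpha> F1 F2 R M. card {j. 0 < \<alpha> j} = s \<longrightarrow> SHP F1 c R \<longrightarrow> SHP F2 c R \<longrightarrow>
     (\<forall>z\<in>PD c R. norm (F1 z - F2 z) \<le> M) \<longrightarrow>
     SHP (mderiv \<alpha> F1) c (R - real s * r) \<and> SHP (mderiv \<alpha> F2) c (R - real s * r) \<and>
     (\<forall>z\<in>PD c (R - real s * r). norm (mderiv \<alpha> F1 z - mderiv \<alpha> F2 z) \<le> real (mi_fact \<alpha>) * M / r ^ mi_abs \<alpha>)"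
proof (induction s)
  case 0
  show ?case
  proof (intro allI impI)
    fix \<alpha> :: "'a \<Rightarrow> nat" and F1 F2 :: "complex^'a \<Rightarrow> complex" and R M
    assume a: "card {j. 0 < \<alpha> j} = 0" and h: "SHP F1 c R" "SHP F2 c R" "\<forall>z\<in>PD c R. norm (F1 z - F2 z) \<le> M"
    have "\<alpha> = (\<lambda>_. 0)" using a by (auto simp: fun_eq_iff)
    then have "mi_abs \<alpha> = 0" "mi_fact \<alpha> = 1" "\<And>F. mderiv \<alpha> F = F"
      by (auto simp: mi_abs_def mi_fact_def mderiv_def)
    then show "SHP (mderiv \<alpha> F1) c (R - real 0 * r) \<and> SHP (mderiv \<alpha> F2) c (R - real 0 * r) \<and>
     (\<forall>z\<in>PD c (R - real 0 * r). norm (mderiv \<alpha> F1 z - mderiv \<alpha> F2 z) \<le> real (mi_fact \<alpha>) * M / r ^ mi_abs \<alpha>)"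
      using h by simp
  qed
next
  case (Suc s)
  show ?case
  proof (intro allI impI)
    fix \<alpha> :: "'a \<Rightarrow> nat" and F1 F2 :: "complex^'a \<Rightarrow> complex" and R M
    assume a: "card {j. 0 < \<alpha> j} = Suc s" and F1: "SHP F1 c R" and F2: "SHP F2 c R"
      and M: "\<forall>z\<in>PD c R. norm (F1 z - F2 z) \<le> M"
    have "{j. 0 < \<alpha> j} \<noteq> {}" using a by (metis card.empty nat.simps(3))
    then have "\<exists>j. 0 < \<alpha> j" by auto
    define i where "i = (SOME j. 0 < \<alpha> j)"
    have ai: "0 < \<alpha> i" unfolding i_def by (rule someI_ex) fact
    define \<beta> where "\<beta> = \<alpha>(i:=0)"
    have "{j. 0 < \<beta> j} = {j. 0 < \<alpha> j} - {i}" by (auto simp: \<beta>_def)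
    then have cb: "card {j. 0 < \<beta> j} = s" using a ai by (simp add: card_Diff_singleton)
    have md: "mderiv \<alpha> F = mderiv \<beta> ((cpartial i ^^ \<alpha> i) F)" for F
      unfolding \<beta>_def by (rule mderiv_block[where \<alpha>=\<alpha> and i=i, OF ai]) (simp add: i_def)
    define G1 where "G1 = (cpartial i ^^ \<alpha> i) F1"
    define G2 where "G2 = (cpartial i ^^ \<alpha> i) F2"
    have G1: "SHP G1 c (R - r)" unfolding G1_def by (rule SHP_cpartial[OF F1 r])
    have G2: "SHP G2 c (R - r)" unfolding G2_def by (rule SHP_cpartial[OF F2 r])
    have GM: "\<forall>z\<in>PD c (R - r). norm (G1 z - G2 z) \<le> fact (\<alpha> i) * M / r ^ \<alpha> i"
      unfolding G1_def G2_def using cpartial_diff_bound[OF F1 F2 r M] by blast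
    have IH: "SHP (mderiv \<beta> G1) c (R - r - real s * r) \<and> SHP (mderiv \<beta> G2) c (R - r - real s * r) \<and>
     (\<forall>z\<in>PD c (R - r - real s * r). norm (mderiv \<beta> G1 z - mderiv \<beta> G2 z) \<le> real (mi_fact \<beta>) * (fact (\<alpha> i) * M / r ^ \<alpha> i) / r ^ mi_abs \<beta>)"
      using Suc.IH cb G1 G2 GM by blast
    have eqR: "R - r - real s * r = R - real (Suc s) * r" by (simp add: algebra_simps)
    have ab: "mi_abs \<alpha> = \<alpha> i + mi_abs \<beta>" unfolding \<beta>_def by (rule mi_abs_split)
    have af: "mi_fact \<alpha> = fact (\<alpha> i) * mi_fact \<beta>" unfolding \<beta>_def by (rule mi_fact_split)
    have eqB: "real (mi_fact \<beta>) * (fact (\<alpha> i) * M / r ^ \<alpha> i) / r ^ mi_abs \<beta> = real (mi_fact \<alpha>) * M / r ^ mi_abs \<alpha>"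
      unfolding ab af using r by (simp add: power_add field_simps)
    show "SHP (mderiv \<alpha> F1) c (R - real (Suc s) * r) \<and> SHP (mderiv \<alpha> F2) c (R - real (Suc s) * r) \<and>
     (\<forall>z\<in>PD c (R - real (Suc s) * r). norm (mderiv \<alpha> F1 z - mderiv \<alpha> F2 z) \<le> real (mi_fact \<alpha>) * M / r ^ mi_abs \<alpha>)"
      using IH unfolding md G1_def[symmetric] G2_def[symmetric] eqR eqB .
  qed
qed



lemma holo_slice_deriv:
  assumes "holo_on F U" "upd z i t \<in> U"
  shows "(\<lambda>s. F (upd z i s)) field_differentiable (at t)"
proof -
  obtain L where L: "(F has_derivative L) (at (upd z i t))" "\<forall>v. L (\<chi> k. \<i> * v $ k) = \<i> * L v"
    using assms unfolding holo_on_def by blast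
  define \<psi> :: "complex \<Rightarrow> complex^'a" where "\<psi> s = (\<chi> k. if k = i then s else 0)" for s
  have lin: "linear \<psi>" unfolding \<psi>_def by (rule linearI) (auto simp: vec_eq_iff)
  then have bl: "bounded_linear \<psi>" by (simp add: linear_conv_bounded_linear)
  have up: "(\<lambda>s. upd z i s) = (\<lambda>s. upd z i 0 + \<psi> s)" by (simp add: fun_eq_iff vec_eq_iff \<psi>_def)
  have "((\<lambda>s. upd z i 0 + \<psi> s) has_derivative (\<lambda>h. 0 + \<psi> h)) (at t)"
    by (rule has_derivative_add[OF has_derivative_const bounded_linear_imp_has_derivative[OF bl]])
  then have d\<psi>: "((\<lambda>s. upd z i s) has_derivative \<psi>) (at t)"
    by (subst up) simp
  have D: "((\<lambda>s. F (upd z i s)) has_derivative (\<lambda>h. L (\<psi> h))) (at t)"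
    using has_derivative_compose[OF d\<psi>, of F L] L(1) by (simp add: o_def)
  have eqL: "L (\<psi> h) = L (\<psi> 1) * h" for h
  proof -
    have bL: "linear L" using L(1) has_derivative_linear by blast
    have "\<psi> h = Re h *\<^sub>R \<psi> 1 + Im h *\<^sub>R (\<chi> k. \<i> * \<psi> 1 $ k)"
    unfolding vec_eq_iff proof
      fix k
      have "h = of_real (Re h) + \<i> * of_real (Im h)" by (rule complex_eq)
      then show "\<psi> h $ k = (Re h *\<^sub>R \<psi> 1 + Im h *\<^sub>R (\<chi> k. \<i> * \<psi> 1 $ k)) $ k"
        by (cases "k = i") (simp_all add: \<psi>_def, simp_all add: scaleR_conv_of_real mult.commute)
    qed
    then have "L (\<psi> h) = Re h *\<^sub>R L (\<psi> 1) + Im h *\<^sub>R L (\<chi> k. \<i> * \<psi> 1 $ k)"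
      by (simp add: linear_add[OF bL] linear_scale[OF bL])
    also have "\<dots> = (of_real (Re h) + \<i> * of_real (Im h)) * L (\<psi> 1)"
      using L(2) by (simp add: scaleR_conv_of_real algebra_simps)
    also have "of_real (Re h) + \<i> * of_real (Im h) = h" by (rule complex_eq[symmetric])
    finally show ?thesis by (simp add: mult.commute)
  qed
  have "(\<lambda>h. L (\<psi> h)) = (*) (L (\<psi> 1))" by (rule ext) (rule eqL)
  then have "((\<lambda>s. F (upd z i s)) has_derivative (*) (L (\<psi> 1))) (at t)"
    using D by simp
  then have "((\<lambda>s. F (upd z i s)) has_field_derivative (L (\<psi> 1))) (at t)"
    unfolding has_field_derivative_def .
  then show ?thesis unfolding field_differentiable_def by (rule exI)
qed

lemma holo_onD: "holo_on F U \<Longrightarrow> z \<in> U \<Longrightarrow> \<exists>L. (F has_derivative L) (at z)"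
  unfolding holo_on_def by blast

lemma holo_SHP:
  assumes "holo_on F U" "PD c R \<subseteq> U"
  shows "SHP F c R"
  unfolding SHP_def
proof (intro conjI ballI allI)
  have "continuous (at z) F" if zz: "z \<in> PD c R" for z
  proof -
    have "z \<in> U" using subsetD[OF assms(2) zz] .
    then obtain L where "(F has_derivative L) (at z)" using holo_onD[OF assms(1)] by blast
    then show ?thesis by (rule has_derivative_continuous)
  qed
  then show "continuous_on (PD c R) F" by (simp add: continuous_at_imp_continuous_on)
next
  fix z i assume z: "z \<in> PD c R"
  show "(\<lambda>t. F (upd z i t)) holomorphic_on ball (c $ i) R"
    unfolding holomorphic_on_def
  proof
    fix t assume "t \<in> ball (c $ i) R"
    then have "upd z i t \<in> PD c R" using z upd_PD by blast
    then have "upd z i t \<in> U" by (rule subsetD[OF assms(2)])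
    then have "(\<lambda>t. F (upd z i t)) field_differentiable at t" by (rule holo_slice_deriv[OF assms(1)])
    then show "(\<lambda>t. F (upd z i t)) field_differentiable at t within ball (c $ i) R"
      by (rule field_differentiable_at_within)
  qed
qed



lemma tail_bound:
  fixes g :: "'i \<Rightarrow> complex" and h :: "'i \<Rightarrow> nat"
  assumes fin: "finite {\<alpha>. h \<alpha> \<le> N}"
    and sw: "(\<lambda>\<alpha>. norm (g \<alpha>) * 2 ^ h \<alpha>) summable_on UNIV"
  shows "g summable_on UNIV \<and> norm ((\<Sum>\<^sub>\<infinity>\<alpha>. g \<alpha>) - sum g {\<alpha>. h \<alpha> \<le> N}) \<le> (\<Sum>\<^sub>\<infinity>\<alpha>. norm (g \<alpha>) * 2 ^ h \<alpha>) / 2 ^ N"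
proof -
  define T where "T = {\<alpha>. h \<alpha> \<le> N}"
  define C where "C = - T"
  have ns: "(\<lambda>\<alpha>. norm (g \<alpha>)) summable_on UNIV"
  proof (rule summable_on_comparison_test[OF sw])
    fix x
    have "norm (g x) * 1 \<le> norm (g x) * 2 ^ h x" by (rule mult_left_mono) auto
    then show "norm (g x) \<le> norm (g x) * 2 ^ h x" by simp
  qed auto
  then have gs: "g summable_on UNIV" by (rule abs_summable_summable)
  have gsC: "g summable_on C" by (rule summable_on_subset_banach[OF gs]) auto
  have gsT: "g summable_on T" by (rule summable_on_subset_banach[OF gs]) auto
  have "infsum g UNIV = infsum g (T \<union> C)" by (simp add: C_def)
  also have "\<dots> = infsum g T + infsum g C"
    by (rule infsum_Un_disjoint[OF gsT gsC]) (auto simp: C_def)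
  also have "infsum g T = sum g T" using fin by (simp add: T_def)
  finally have eq: "infsum g UNIV - sum g T = infsum g C" by simp
  have nsC: "(\<lambda>\<alpha>. norm (g \<alpha>)) summable_on C" by (rule summable_on_subset_banach[OF ns]) auto
  have swC: "(\<lambda>\<alpha>. norm (g \<alpha>) * 2 ^ h \<alpha>) summable_on C" by (rule summable_on_subset_banach[OF sw]) auto
  have "norm (infsum g C) \<le> infsum (\<lambda>\<alpha>. norm (g \<alpha>)) C"
    by (rule norm_infsum_bound) (use nsC in simp)
  also have "\<dots> \<le> infsum (\<lambda>\<alpha>. norm (g \<alpha>) * 2 ^ h \<alpha> * (1 / 2 ^ N)) C"
  proof (rule infsum_mono[OF nsC])
    show "(\<lambda>\<alpha>. norm (g \<alpha>) * 2 ^ h \<alpha> * (1 / 2 ^ N)) summable_on C"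
      by (rule summable_on_cmult_left[OF swC])
  next
    fix \<alpha> assume "\<alpha> \<in> C"
    then have "N < h \<alpha>" by (auto simp: C_def T_def)
    then have "(2::real) ^ N \<le> 2 ^ h \<alpha>" by (intro power_increasing) auto
    then have "1 \<le> (2::real) ^ h \<alpha> * (1 / 2 ^ N)" by (simp add: field_simps)
    then show "norm (g \<alpha>) \<le> norm (g \<alpha>) * 2 ^ h \<alpha> * (1 / 2 ^ N)"
      by (metis mult.assoc mult_left_mono mult.right_neutral norm_ge_zero)
  qed
  also have "\<dots> = infsum (\<lambda>\<alpha>. norm (g \<alpha>) * 2 ^ h \<alpha>) C * (1 / 2 ^ N)"
    by (rule infsum_cmult_left) (use swC in simp)
  finally have A: "norm (infsum g C) \<le> infsum (\<lambda>\<alpha>. norm (g \<alpha>) * 2 ^ h \<alpha>) C * (1 / 2 ^ N)" .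
  have Bm: "infsum (\<lambda>\<alpha>. norm (g \<alpha>) * 2 ^ h \<alpha>) C \<le> infsum (\<lambda>\<alpha>. norm (g \<alpha>) * 2 ^ h \<alpha>) UNIV"
    by (rule infsum_mono2[OF swC sw]) auto
  have "norm (infsum g C) \<le> infsum (\<lambda>\<alpha>. norm (g \<alpha>) * 2 ^ h \<alpha>) UNIV * (1 / 2 ^ N)"
    using A mult_right_mono[OF Bm, of "1/2^N"] by simp
  then show ?thesis using gs eq by (simp add: T_def)
qed

lemma infsum_tendsto_tail:
  fixes a :: "nat \<Rightarrow> 'i \<Rightarrow> complex" and b :: "'i \<Rightarrow> complex" and h :: "'i \<Rightarrow> nat"
  assumes fin: "\<And>N. finite {\<alpha>. h \<alpha> \<le> N}"
    and pt: "\<And>\<alpha>. (\<lambda>j. a j \<alpha>) \<longlonglongrightarrow> b \<alpha>"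
    and ev: "eventually (\<lambda>j. (\<lambda>\<alpha>. norm (a j \<alpha>) * 2 ^ h \<alpha>) summable_on UNIV \<and> (\<Sum>\<^sub>\<infinity>\<alpha>. norm (a j \<alpha>) * 2 ^ h \<alpha>) \<le> B) sequentially"
    and bb: "(\<lambda>\<alpha>. norm (b \<alpha>) * 2 ^ h \<alpha>) summable_on UNIV"
  shows "(\<lambda>j. \<Sum>\<^sub>\<infinity>\<alpha>. a j \<alpha>) \<longlonglongrightarrow> (\<Sum>\<^sub>\<infinity>\<alpha>. b \<alpha>)"
proof (rule tendstoI)
  fix e :: real assume e: "0 < e"
  define B' where "B' = (\<Sum>\<^sub>\<infinity>\<alpha>. norm (b \<alpha>) * 2 ^ h \<alpha>)"
  define K where "K = max B 0 + max B' 0"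
  have "\<exists>N. K / 2 ^ N < e / 2"
  proof -
    have "(\<lambda>N. K * (1/2) ^ N) \<longlonglongrightarrow> K * 0"
      by (intro tendsto_intros) auto
    then have "eventually (\<lambda>N. dist (K * (1/2) ^ N) (K * 0) < e / 2) sequentially"
      using e by (intro tendstoD) auto
    then obtain N where "dist (K * (1/2) ^ N) (K * 0) < e / 2" by (meson eventually_sequentially order_refl)
    moreover have "K \<ge> 0" by (simp add: K_def)
    ultimately have "K / 2 ^ N < e / 2" by (simp add: power_one_over divide_simps)
    then show ?thesis by blast
  qed
  then obtain N where N: "K / 2 ^ N < e / 2" by blast
  define T where "T = {\<alpha>. h \<alpha> \<le> N}"
  have "((\<lambda>j. sum (a j) T) \<longlongrightarrow> sum b T) sequentially"
    by (intro tendsto_sum pt)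
  then have ev2: "eventually (\<lambda>j. dist (sum (a j) T) (sum b T) < e / 2) sequentially"
    using e by (intro tendstoD) auto
  have tb: "norm ((\<Sum>\<^sub>\<infinity>\<alpha>. b \<alpha>) - sum b T) \<le> B' / 2 ^ N"
    using tail_bound[OF fin bb] by (simp add: B'_def T_def)
  show "eventually (\<lambda>j. dist (\<Sum>\<^sub>\<infinity>\<alpha>. a j \<alpha>) (\<Sum>\<^sub>\<infinity>\<alpha>. b \<alpha>) < e) sequentially"
    using ev ev2
  proof eventually_elim
    case (elim j)
    have ta1: "norm ((\<Sum>\<^sub>\<infinity>\<alpha>. a j \<alpha>) - sum (a j) T) \<le> (\<Sum>\<^sub>\<infinity>\<alpha>. norm (a j \<alpha>) * 2 ^ h \<alpha>) / 2 ^ N"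
      using tail_bound[OF fin, of "a j"] elim(1) by (simp add: T_def)
    have "(\<Sum>\<^sub>\<infinity>\<alpha>. norm (a j \<alpha>) * 2 ^ h \<alpha>) / 2 ^ N \<le> B / 2 ^ N"
      by (rule divide_right_mono) (use elim(1) in auto)
    with ta1 have ta: "norm ((\<Sum>\<^sub>\<infinity>\<alpha>. a j \<alpha>) - sum (a j) T) \<le> B / 2 ^ N" by linarith
    define x where "x = (\<Sum>\<^sub>\<infinity>\<alpha>. a j \<alpha>)"
    define y where "y = (\<Sum>\<^sub>\<infinity>\<alpha>. b \<alpha>)"
    define u where "u = sum (a j) T"
    define v where "v = sum b T"
    have "x - y = ((x - u) + (u - v)) - (y - v)" by simp
    then have "norm (x - y) \<le> norm ((x - u) + (u - v)) + norm (y - v)"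
      by (metis norm_triangle_ineq4)
    also have "norm ((x - u) + (u - v)) \<le> norm (x - u) + norm (u - v)" by (rule norm_triangle_ineq)
    finally have "dist (\<Sum>\<^sub>\<infinity>\<alpha>. a j \<alpha>) (\<Sum>\<^sub>\<infinity>\<alpha>. b \<alpha>) \<le>
        norm ((\<Sum>\<^sub>\<infinity>\<alpha>. a j \<alpha>) - sum (a j) T) + dist (sum (a j) T) (sum b T) + norm ((\<Sum>\<^sub>\<infinity>\<alpha>. b \<alpha>) - sum b T)"
      by (simp add: dist_norm x_def y_def u_def v_def)
    also have "\<dots> < B / 2 ^ N + e / 2 + B' / 2 ^ N" using ta tb elim(2) by simp
    also have "B / 2 ^ N + B' / 2 ^ N \<le> K / 2 ^ N"
      by (simp add: K_def add_divide_distrib[symmetric] divide_right_mono)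
    then have "B / 2 ^ N + e / 2 + B' / 2 ^ N < e" using N by argo
    finally show ?case .
  qed
qed



lemma holo_cont: "holo_on F U \<Longrightarrow> continuous_on U F"
proof -
  assume h: "holo_on F U"
  have "continuous (at z) F" if z: "z \<in> U" for z
  proof -
    obtain L where "(F has_derivative L) (at z)" using holo_onD[OF h z] by blast
    then show ?thesis by (rule has_derivative_continuous)
  qed
  then show ?thesis by (simp add: continuous_at_imp_continuous_on)
qed

lemma SHP_zero: "SHP (\<lambda>_. 0) c R"
  unfolding SHP_def by (auto intro!: continuous_intros holomorphic_intros)

lemma PD_sub_cball:
  fixes c :: "complex^'n::finite"
  shows "PD c R \<subseteq> cball c (real CARD('n) * R)"
proof
  fix z assume z: "z \<in> PD c R"
  have "dist c z = L2_set (\<lambda>i. norm ((c - z)$i)) UNIV" by (simp add: dist_norm norm_vec_def)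
  also have "\<dots> \<le> sum (\<lambda>i. norm ((c - z)$i)) UNIV" by (rule L2_set_le_sum) auto
  also have "\<dots> \<le> sum (\<lambda>i. R) (UNIV :: 'n set)"
  proof (rule sum_mono)
    fix i have "norm ((c - z)$i) < R" using z by (simp add: PD_def dist_norm)
    then show "norm ((c - z)$i) \<le> R" by simp
  qed
  also have "\<dots> = real CARD('n) * R" by simp
  finally show "z \<in> cball c (real CARD('n) * R)" by simp
qed

lemma center_PD: "0 < R \<Longrightarrow> c \<in> PD c R"
  by (simp add: PD_def)

lemma finite_mi_abs: "finite {\<alpha>::'n::finite \<Rightarrow> nat. mi_abs \<alpha> \<le> N}"
proof (rule finite_subset)
  show "{\<alpha>::'n \<Rightarrow> nat. mi_abs \<alpha> \<le> N} \<subseteq> PiE UNIV (\<lambda>_. {..N})"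
  proof
    fix \<alpha> :: "'n \<Rightarrow> nat" assume a: "\<alpha> \<in> {\<alpha>. mi_abs \<alpha> \<le> N}"
    have "\<alpha> i \<le> N" for i
    proof -
      have "\<alpha> i \<le> mi_abs \<alpha>" unfolding mi_abs_def by (rule member_le_sum) auto
      then show ?thesis using a by simp
    qed
    then show "\<alpha> \<in> PiE UNIV (\<lambda>_. {..N})" by (simp add: PiE_UNIV_domain)
  qed
  show "finite (PiE (UNIV::'n set) (\<lambda>_. {..N}))" by (rule finite_PiE) auto
qed

lemma tendsto_0_by_scaled:
  fixes x :: "nat \<Rightarrow> complex"
  assumes C: "C \<ge> 0" and h: "\<And>e. e > 0 \<Longrightarrow> eventually (\<lambda>j. norm (x j) \<le> C * e) sequentially"
  shows "x \<longlonglongrightarrow> 0"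
proof (rule tendstoI)
  fix e :: real assume e: "e > 0"
  have e': "e / (C + 1) > 0" using e C by simp
  have lt: "C * (e / (C + 1)) < e" using e C by (simp add: field_simps)
  show "eventually (\<lambda>j. dist (x j) 0 < e) sequentially"
    using h[OF e'] by eventually_elim (use lt in simp)
qed

lemma mi_fact_pos: "0 < mi_fact \<alpha>"
  unfolding mi_fact_def by (rule prod_pos) auto

lemma mderiv_apply:
  fixes c :: "complex^'n::finite"
  assumes r: "0 < r" and F1: "SHP F1 c R" and F2: "SHP F2 c R" and M: "\<forall>z\<in>PD c R. norm (F1 z - F2 z) \<le> M"
    and Rr: "(real CARD('n) + 1) * r \<le> R"
  shows "continuous_on (PD c r) (mderiv \<alpha> F1) \<and>
    (\<forall>z\<in>PD c r. norm (mderiv \<alpha> F1 z - mderiv \<alpha> F2 z) \<le> real (mi_fact \<alpha>) * M / r ^ mi_abs \<alpha>)"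
proof -
  define s where "s = card {j. 0 < \<alpha> j}"
  have "s \<le> CARD('n)" unfolding s_def by (rule card_mono) auto
  then have "real s * r \<le> real CARD('n) * r" using r by (intro mult_right_mono) auto
  then have sub: "PD c r \<subseteq> PD c (R - real s * r)" using Rr by (intro PD_mono) (simp add: algebra_simps)
  have m: "SHP (mderiv \<alpha> F1) c (R - real s * r) \<and>
    (\<forall>z\<in>PD c (R - real s * r). norm (mderiv \<alpha> F1 z - mderiv \<alpha> F2 z) \<le> real (mi_fact \<alpha>) * M / r ^ mi_abs \<alpha>)"
    using mderiv_main[OF r, of s c] F1 F2 M s_def by blast
  then show ?thesis using sub by (auto simp: SHP_def intro: continuous_on_subset)
qed

lemma weighted_summable:
  fixes x D :: "('n::finite \<Rightarrow> nat) \<Rightarrow> complex"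
  assumes x: "x \<in> ell1" and r: "0 < r" and M: "M \<ge> 0"
    and D: "\<And>\<alpha>. norm (D \<alpha>) \<le> real (mi_fact \<alpha>) * M / r ^ mi_abs \<alpha>"
  shows "(\<lambda>\<alpha>. norm (x \<alpha> * D \<alpha> / of_nat (mi_fact \<alpha>)) * 2 ^ mi_abs \<alpha>) summable_on UNIV \<and>
    (\<Sum>\<^sub>\<infinity>\<alpha>. norm (x \<alpha> * D \<alpha> / of_nat (mi_fact \<alpha>)) * 2 ^ mi_abs \<alpha>) \<le> M * (\<Sum>\<^sub>\<infinity>\<alpha>. norm (x \<alpha>) * (2/r) ^ mi_abs \<alpha>)"
proof -
  have xs: "(\<lambda>\<alpha>. norm (x \<alpha>) * (2/r) ^ mi_abs \<alpha>) summable_on UNIV"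
    using x r unfolding ell1_def by auto
  then have xsM: "(\<lambda>\<alpha>. M * (norm (x \<alpha>) * (2/r) ^ mi_abs \<alpha>)) summable_on UNIV"
    by (rule summable_on_cmult_right)
  have pw: "norm (x \<alpha> * D \<alpha> / of_nat (mi_fact \<alpha>)) * 2 ^ mi_abs \<alpha> \<le> M * (norm (x \<alpha>) * (2/r) ^ mi_abs \<alpha>)" for \<alpha>
  proof -
    have fp: "real (mi_fact \<alpha>) > 0" using mi_fact_pos by simp
    have "norm (x \<alpha> * D \<alpha> / of_nat (mi_fact \<alpha>)) * 2 ^ mi_abs \<alpha> = norm (x \<alpha>) * (norm (D \<alpha>) / real (mi_fact \<alpha>)) * 2 ^ mi_abs \<alpha>"
      by (simp add: norm_mult norm_divide)
    also have "\<dots> \<le> norm (x \<alpha>) * (M / r ^ mi_abs \<alpha>) * 2 ^ mi_abs \<alpha>"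
    proof (intro mult_right_mono mult_left_mono)
      show "norm (D \<alpha>) / real (mi_fact \<alpha>) \<le> M / r ^ mi_abs \<alpha>"
        using D[of \<alpha>] fp r by (simp add: divide_simps mult.commute)
    qed auto
    also have "\<dots> = M * (norm (x \<alpha>) * (2/r) ^ mi_abs \<alpha>)" by (simp add: power_divide)
    finally show ?thesis .
  qed
  have s1: "(\<lambda>\<alpha>. norm (x \<alpha> * D \<alpha> / of_nat (mi_fact \<alpha>)) * 2 ^ mi_abs \<alpha>) summable_on UNIV"
    by (rule summable_on_comparison_test[OF xsM]) (use pw in auto)
  have "(\<Sum>\<^sub>\<infinity>\<alpha>. norm (x \<alpha> * D \<alpha> / of_nat (mi_fact \<alpha>)) * 2 ^ mi_abs \<alpha>) \<le> (\<Sum>\<^sub>\<infinity>\<alpha>. M * (norm (x \<alpha>) * (2/r) ^ mi_abs \<alpha>))"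
    by (rule infsum_mono[OF s1 xsM]) (rule pw)
  also have "\<dots> = M * (\<Sum>\<^sub>\<infinity>\<alpha>. norm (x \<alpha>) * (2/r) ^ mi_abs \<alpha>)"
    by (rule infsum_cmult_right) (use xs in simp)
  finally show ?thesis using s1 by simp
qed



theorem mainTheorem4:
  fixes \<Omega> :: "((complex^'n::finite) \<times> (complex^'m::finite)) set"
    and \<xi> :: "complex^'m \<Rightarrow> ('n \<Rightarrow> nat) \<Rightarrow> complex"
    and z0 :: "complex^'n" and w0 :: "complex^'m"
    and V :: "(complex^'n) set"
    and zw :: "nat \<Rightarrow> (complex^'n) \<times> (complex^'m)"
    and fs :: "nat \<Rightarrow> complex^'n \<Rightarrow> complex"
    and f :: "complex^'n \<Rightarrow> complex"
  assumes dom: "open \<Omega>" "connected \<Omega>" "\<Omega> \<noteq> {}"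
    and ell: "\<forall>w\<in>snd ` \<Omega>. \<xi> w \<in> ell1"
    and w0D: "w0 \<in> snd ` \<Omega>"
    and lub: "loc_unif_bdd \<xi> (snd ` \<Omega>) w0"
    and cont: "\<forall>\<alpha>. continuous (at w0 within snd ` \<Omega>) (\<lambda>w. \<xi> w \<alpha>)"
    and pt0: "(z0, w0) \<in> \<Omega>"
    and V: "open V" "compact (closure V)" "closure V \<subseteq> fst ` {x\<in>\<Omega>. snd x = w0}"
    and z0V: "z0 \<in> V"
    and seq: "\<forall>j. zw j \<in> \<Omega> \<and> fst (zw j) \<in> V"
    and lim: "zw \<longlonglongrightarrow> (z0, w0)"
    and hol: "\<forall>j. holo_on (fs j) (fst ` {x\<in>\<Omega>. snd x = snd (zw j)})"
    and holf: "holo_on f V"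
    and unif: "\<forall>K. compact K \<and> K \<subseteq> V \<longrightarrow> uniform_limit K fs f sequentially"
  shows "(\<lambda>j. act (\<xi> (snd (zw j))) (fs j) (fst (zw j))) \<longlonglongrightarrow> act (\<xi> w0) f z0"
proof -
  define n where "n = real CARD('n)"
  have n: "n > 0" by (simp add: n_def)
  obtain \<epsilon> where \<epsilon>: "\<epsilon> > 0" "ball (z0, w0) \<epsilon> \<subseteq> \<Omega>" using open_contains_ball dom(1) pt0 by blast
  obtain \<epsilon>' where \<epsilon>': "\<epsilon>' > 0" "ball z0 \<epsilon>' \<subseteq> V" using open_contains_ball V(1) z0V by blast
  define \<rho> where "\<rho> = min \<epsilon> \<epsilon>' / 2"
  have \<rho>: "\<rho> > 0" "\<rho> < \<epsilon>'" "2 * \<rho> \<le> \<epsilon>" using \<epsilon> \<epsilon>' by (auto simp: \<rho>_def)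
  define R where "R = \<rho> / n"
  have R: "R > 0" using \<rho> n by (simp add: R_def)
  define r where "r = R / (n + 1)"
  have r: "r > 0" using R n by (simp add: r_def)
  have Rr: "(real CARD('n) + 1) * r \<le> R" using n by (simp add: r_def n_def[symmetric])
  define K where "K = cball z0 \<rho>"
  have PDK: "PD z0 R \<subseteq> K" using PD_sub_cball[of z0 R] n by (simp add: K_def R_def n_def[symmetric])
  have KV: "K \<subseteq> V" using \<rho> \<epsilon>' unfolding K_def by auto
  have tube: "(z, w) \<in> \<Omega>" if z: "z \<in> K" and w: "w \<in> ball w0 \<rho>" for z w
  proof -
    have "dist (z0, w0) (z, w) \<le> dist z0 z + dist w0 w"
      using norm_Pair_le[of "z0 - z" "w0 - w"] by (simp add: dist_norm)
    also have "\<dots> < \<epsilon>" using z w \<rho> by (auto simp: K_def)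
    finally show ?thesis using \<epsilon>(2) by auto
  qed
  have slice: "K \<subseteq> fst ` {x\<in>\<Omega>. snd x = snd (zw j)}" if "snd (zw j) \<in> ball w0 \<rho>" for j
  proof
    fix z assume "z \<in> K"
    then have "(z, snd (zw j)) \<in> \<Omega>" using tube that by blast
    then show "z \<in> fst ` {x\<in>\<Omega>. snd x = snd (zw j)}" by (auto intro: image_eqI[where x="(z, snd (zw j))"])
  qed
  have SHPf: "SHP f z0 R" using holo_SHP[OF holf] PDK KV by blast
  have SHPfs: "SHP (fs j) z0 R" if "snd (zw j) \<in> ball w0 \<rho>" for j
    using holo_SHP[OF hol[rule_format, of j]] PDK slice[OF that] by blast
  have cf: "continuous_on K f" using holo_cont[OF holf] KV by (rule continuous_on_subset)
  have "bounded (f ` K)" unfolding K_def by (rule compact_imp_bounded[OF compact_continuous_image[OF cf[unfolded K_def] compact_cball]])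
  then obtain Mf where Mf: "Mf > 0" "\<forall>z\<in>K. norm (f z) \<le> Mf" by (auto simp: bounded_pos)
  have unifK: "uniform_limit K fs f sequentially" using unif KV by (simp add: K_def)
  have fstlim: "(\<lambda>j. fst (zw j)) \<longlonglongrightarrow> z0" using tendsto_fst[OF lim] by simp
  have sndlim: "(\<lambda>j. snd (zw j)) \<longlonglongrightarrow> w0" using tendsto_snd[OF lim] by simp
  have Ew: "eventually (\<lambda>j. snd (zw j) \<in> ball w0 \<rho>) sequentially"
    by (rule topological_tendstoD[OF sndlim]) (use \<rho> in auto)
  have Ez: "eventually (\<lambda>j. fst (zw j) \<in> PD z0 r) sequentially"
    by (rule topological_tendstoD[OF fstlim open_PD center_PD[OF r]])
  have EU: "eventually (\<lambda>j. \<forall>z\<in>K. dist (fs j z) (f z) < e) sequentially" if "e > 0" for e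
    by (rule uniform_limitD[OF unifK that])
  have wD: "snd (zw j) \<in> snd ` \<Omega>" for j using seq by auto

  have Mf0: "\<forall>z\<in>PD z0 R. norm (f z - 0) \<le> Mf" using Mf PDK by auto
  have DF: "continuous_on (PD z0 r) (mderiv \<alpha> f) \<and>
    (\<forall>z\<in>PD z0 r. norm (mderiv \<alpha> f z - mderiv \<alpha> (\<lambda>_. 0) z) \<le> real (mi_fact \<alpha>) * Mf / r ^ mi_abs \<alpha>)" for \<alpha>
    by (rule mderiv_apply[OF r SHPf SHP_zero Mf0 Rr])
  have DFb: "norm (mderiv \<alpha> f z0) \<le> real (mi_fact \<alpha>) * Mf / r ^ mi_abs \<alpha>" for \<alpha>
  proof -
    have z0r: "z0 \<in> PD z0 r" by (rule center_PD[OF r])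
    then show ?thesis using DF[of \<alpha>] by (simp add: mderiv_zero)
  qed
  have DS: "norm (mderiv \<alpha> (fs j) z) \<le> real (mi_fact \<alpha>) * (Mf + 1) / r ^ mi_abs \<alpha>"
    if "snd (zw j) \<in> ball w0 \<rho>" "\<forall>z\<in>K. dist (fs j z) (f z) < 1" "z \<in> PD z0 r" for \<alpha> j z
  proof -
    have "\<forall>z\<in>PD z0 R. norm (fs j z - 0) \<le> Mf + 1"
    proof
      fix z assume "z \<in> PD z0 R"
      then have zK: "z \<in> K" using PDK by auto
      have "norm (fs j z) \<le> norm (f z) + dist (fs j z) (f z)"
        by (metis dist_norm norm_triangle_sub)
      then show "norm (fs j z - 0) \<le> Mf + 1" using Mf zK that(2) by fastforce
    qed
    from mderiv_apply[OF r SHPfs[OF that(1)] SHP_zero this Rr, of \<alpha>] that(3)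
    show ?thesis by (simp add: mderiv_zero)
  qed
  have DD: "norm (mderiv \<alpha> (fs j) z - mderiv \<alpha> f z) \<le> real (mi_fact \<alpha>) * e / r ^ mi_abs \<alpha>"
    if "snd (zw j) \<in> ball w0 \<rho>" "\<forall>z\<in>K. dist (fs j z) (f z) < e" "z \<in> PD z0 r" for \<alpha> j z e
  proof -
    have "\<forall>z\<in>PD z0 R. norm (fs j z - f z) \<le> e"
      using that(2) PDK by (auto simp: dist_norm less_imp_le)
    from mderiv_apply[OF r SHPfs[OF that(1)] SHPf this Rr, of \<alpha>] that(3)
    show ?thesis by simp
  qed
  have PT: "(\<lambda>j. mderiv \<alpha> (fs j) (fst (zw j))) \<longlonglongrightarrow> mderiv \<alpha> f z0" for \<alpha>
  proof -
    have "isCont (mderiv \<alpha> f) z0"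
      using DF[of \<alpha>] center_PD[OF r] continuous_on_eq_continuous_at[OF open_PD] by blast
    then have c1: "(\<lambda>j. mderiv \<alpha> f (fst (zw j))) \<longlonglongrightarrow> mderiv \<alpha> f z0"
      by (rule isCont_tendsto_compose[OF _ fstlim])
    have c2: "(\<lambda>j. mderiv \<alpha> (fs j) (fst (zw j)) - mderiv \<alpha> f (fst (zw j))) \<longlonglongrightarrow> 0"
    proof (rule tendsto_0_by_scaled)
      show "0 \<le> real (mi_fact \<alpha>) / r ^ mi_abs \<alpha>" using r by simp
    next
      fix e :: real assume e: "e > 0"
      show "eventually (\<lambda>j. norm (mderiv \<alpha> (fs j) (fst (zw j)) - mderiv \<alpha> f (fst (zw j))) \<le> real (mi_fact \<alpha>) / r ^ mi_abs \<alpha> * e) sequentially"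
        using Ew EU[OF e] Ez
      proof eventually_elim
        case (elim j)
        then show ?case using DD[OF elim] by simp
      qed
    qed
    show ?thesis using tendsto_add[OF c2 c1] by simp
  qed
  have XI: "(\<lambda>j. \<xi> (snd (zw j)) \<alpha>) \<longlonglongrightarrow> \<xi> w0 \<alpha>" for \<alpha>
    by (rule continuous_within_tendsto_compose'[OF cont[rule_format] wD sndlim])
  obtain V' B where V': "open V'" "w0 \<in> V'" "\<forall>w'\<in>V' \<inter> snd ` \<Omega>. (\<Sum>\<^sub>\<infinity>\<alpha>. norm (\<xi> w' \<alpha>) * (2/r) ^ mi_abs \<alpha>) \<le> B"
    using lub r unfolding loc_unif_bdd_def by (meson divide_pos_pos zero_less_numeral)
  have EV: "eventually (\<lambda>j. snd (zw j) \<in> V') sequentially"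
    by (rule topological_tendstoD[OF sndlim V'(1,2)])
  show ?thesis
    unfolding act_def
  proof (rule infsum_tendsto_tail[where h = mi_abs and B = "(Mf + 1) * B"])
    show "finite {\<alpha>. mi_abs \<alpha> \<le> N}" for N by (rule finite_mi_abs)
  next
    fix \<alpha>
    show "(\<lambda>j. \<xi> (snd (zw j)) \<alpha> * mderiv \<alpha> (fs j) (fst (zw j)) / of_nat (mi_fact \<alpha>)) \<longlonglongrightarrow>
          \<xi> w0 \<alpha> * mderiv \<alpha> f z0 / of_nat (mi_fact \<alpha>)"
      using mi_fact_pos[of \<alpha>] by (intro tendsto_intros XI PT) auto
  next
    show "(\<lambda>\<alpha>. norm (\<xi> w0 \<alpha> * mderiv \<alpha> f z0 / of_nat (mi_fact \<alpha>)) * 2 ^ mi_abs \<alpha>) summable_on UNIV"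
      using weighted_summable[OF ell[rule_format, OF w0D] r _ DFb] Mf by simp
  next
    have one: "(1::real) > 0" by simp
    show "eventually (\<lambda>j. (\<lambda>\<alpha>. norm (\<xi> (snd (zw j)) \<alpha> * mderiv \<alpha> (fs j) (fst (zw j)) / of_nat (mi_fact \<alpha>)) * 2 ^ mi_abs \<alpha>) summable_on UNIV \<and>
        (\<Sum>\<^sub>\<infinity>\<alpha>. norm (\<xi> (snd (zw j)) \<alpha> * mderiv \<alpha> (fs j) (fst (zw j)) / of_nat (mi_fact \<alpha>)) * 2 ^ mi_abs \<alpha>) \<le> (Mf + 1) * B) sequentially"
      using Ew EU[OF one] Ez EV
    proof eventually_elim
      case (elim j)
      have ws: "(\<lambda>\<alpha>. norm (\<xi> (snd (zw j)) \<alpha> * mderiv \<alpha> (fs j) (fst (zw j)) / of_nat (mi_fact \<alpha>)) * 2 ^ mi_abs \<alpha>) summable_on UNIV \<and>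
        (\<Sum>\<^sub>\<infinity>\<alpha>. norm (\<xi> (snd (zw j)) \<alpha> * mderiv \<alpha> (fs j) (fst (zw j)) / of_nat (mi_fact \<alpha>)) * 2 ^ mi_abs \<alpha>) \<le>
         (Mf + 1) * (\<Sum>\<^sub>\<infinity>\<alpha>. norm (\<xi> (snd (zw j)) \<alpha>) * (2/r) ^ mi_abs \<alpha>)"
        by (rule weighted_summable[OF ell[rule_format, OF wD] r]) (use Mf DS[OF elim(1,2,3)] in auto)
      have "(\<Sum>\<^sub>\<infinity>\<alpha>. norm (\<xi> (snd (zw j)) \<alpha>) * (2/r) ^ mi_abs \<alpha>) \<le> B"
        using V'(3) elim(4) wD by blast
      then have "(Mf + 1) * (\<Sum>\<^sub>\<infinity>\<alpha>. norm (\<xi> (snd (zw j)) \<alpha>) * (2/r) ^ mi_abs \<alpha>) \<le> (Mf + 1) * B"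
        using Mf by (intro mult_left_mono) auto
      then show ?case using ws by linarith
    qed
  qed
qed


end
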